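(* Let $G$ be a tree with $p\ge 2$ vertices $v_1,\dots,v_p$. Then for every $i=1,\dots,p$, $\psi_i(\pm1)=(\mp1)^{p-1}$, and $\widetilde\psi(\pm1)=(p-1)(\mp1)^{p-2}$.
   Context: For a finite simple graph $G$ with vertices $v_1,\dots,v_p$, let $D=\mathrm{diag}(d(v_1),\dots,d(v_p))$ be the degree matrix and $A$ the adjacency matrix ($a_{vw}=1$ if $v,w$ adjacent, else $0$). Let $\psi(z)=\det(-zD+A)$ and, for each $i$, $\psi_i(z)=\det(-zD_i+A_i)$ where $D_i$, $A_i$ are the principal submatrices of $D$, $A$ obtained by deleting the row and column corresponding to $v_i$. For a tree, $\psi(\pm1)=0$ (known fact), and $\widetilde\psi(z):=\psi(z)/(z^2-1)$ is a polynomial. *)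

theory Defs
  imports "HOL-Computational_Algebra.Polynomial" "HOL-Combinatorics.Permutations"
begin

definition simple_graph :: "'a set \<Rightarrow> ('a \<Rightarrow> 'a \<Rightarrow> bool) \<Rightarrow> bool" where
  "simple_graph V E \<longleftrightarrow> finite V \<and> (\<forall>u v. E u v \<longrightarrow> u \<in> V \<and> v \<in> V)
     \<and> (\<forall>u v. E u v \<longrightarrow> E v u) \<and> (\<forall>u. \<not> E u u)"

definition edges :: "('a \<Rightarrow> 'a \<Rightarrow> bool) \<Rightarrow> 'a set set" where
  "edges E = {{u, v} | u v. E u v}"

definition connected_graph :: "'a set \<Rightarrow> ('a \<Rightarrow> 'a \<Rightarrow> bool) \<Rightarrow> bool" where
  "connected_graph V E \<longleftrightarrow> (\<forall>u\<in>V. \<forall>v\<in>V. E\<^sup>*\<^sup>* u v)"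

definition is_tree :: "'a set \<Rightarrow> ('a \<Rightarrow> 'a \<Rightarrow> bool) \<Rightarrow> bool" where
  "is_tree V E \<longleftrightarrow> simple_graph V E \<and> V \<noteq> {} \<and> connected_graph V E
     \<and> card (edges E) = card V - 1"

definition degree :: "'a set \<Rightarrow> ('a \<Rightarrow> 'a \<Rightarrow> bool) \<Rightarrow> 'a \<Rightarrow> nat" where
  "degree V E v = card {w \<in> V. E v w}"

definition det_on :: "'a set \<Rightarrow> ('a \<Rightarrow> 'a \<Rightarrow> 'b::comm_ring_1) \<Rightarrow> 'b" where
  "det_on S M = (\<Sum>p\<in>{p. p permutes S}. of_int (sign p) * (\<Prod>i\<in>S. M i (p i)))"

definition psi_matrix :: "'a set \<Rightarrow> ('a \<Rightarrow> 'a \<Rightarrow> bool) \<Rightarrow> 'a \<Rightarrow> 'a \<Rightarrow> real poly" where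
  "psi_matrix V E u w =
     (if u = w then [:0, - of_nat (degree V E u):] else 0) + (if E u w then 1 else 0)"

definition psi :: "'a set \<Rightarrow> ('a \<Rightarrow> 'a \<Rightarrow> bool) \<Rightarrow> real poly" where
  "psi V E = det_on V (psi_matrix V E)"

text \<open>psi_i: delete row and column of vertex v (degrees stay those of G).\<close>
definition psi_del :: "'a set \<Rightarrow> ('a \<Rightarrow> 'a \<Rightarrow> bool) \<Rightarrow> 'a \<Rightarrow> real poly" where
  "psi_del V E v = det_on (V - {v}) (psi_matrix V E)"

text \<open>psi tilde = psi / (z^2 - 1) (exact division for trees).\<close>
definition psi_tilde :: "'a set \<Rightarrow> ('a \<Rightarrow> 'a \<Rightarrow> bool) \<Rightarrow> real poly" where
  "psi_tilde V E = psi V E div [:-1, 0, 1:]"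

end

theory Submission
  imports Defs
begin

lemma perm_fix_eq:
  assumes "u \<in> S"
  shows "{p. p permutes S \<and> p u = u} = {p. p permutes S - {u}}"
proof (intro set_eqI iffI)
  fix p assume "p \<in> {p. p permutes S \<and> p u = u}"
  then show "p \<in> {p. p permutes S - {u}}"
    by (auto intro: permutes_superset)
next
  fix p assume "p \<in> {p. p permutes S - {u}}"
  then have "p permutes S - {u}" by simp
  then show "p \<in> {p. p permutes S \<and> p u = u}"
    by (auto intro: permutes_subset permutes_not_in)
qed

lemma sum_fix:
  assumes "finite S" "u \<in> S"
  shows "(\<Sum>p\<in>{p. p permutes S}. if p u = u then g p else 0) = (\<Sum>p\<in>{p. p permutes S - {u}}. g p)"
proof -
  have "(\<Sum>p\<in>{p. p permutes S}. if p u = u then g p else 0) = sum g {p \<in> {p. p permutes S}. p u = u}"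
    by (rule sum.inter_filter[symmetric]) (simp add: finite_permutations assms)
  also have "{p \<in> {p. p permutes S}. p u = u} = {p. p permutes S - {u}}"
    using perm_fix_eq[OF assms(2)] by simp
  finally show ?thesis .
qed

lemma det_on_cong:
  assumes "\<And>i j. i \<in> S \<Longrightarrow> j \<in> S \<Longrightarrow> M i j = N i j"
  shows "det_on S M = det_on S N"
  unfolding det_on_def
proof (rule sum.cong[OF refl])
  fix p assume "p \<in> {p. p permutes S}"
  then have pp: "p permutes S" by simp
  have pin: "p i \<in> S" if "i \<in> S" for i using permutes_in_image[OF pp] that by simp
  have "(\<Prod>i\<in>S. M i (p i)) = (\<Prod>i\<in>S. N i (p i))"
    by (rule prod.cong[OF refl]) (rule assms, assumption, rule pin, assumption)
  then show "of_int (sign p) * (\<Prod>i\<in>S. M i (p i)) = of_int (sign p) * (\<Prod>i\<in>S. N i (p i))"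
    by simp
qed

lemma det_on_diag_add:
  fixes M N :: "'a \<Rightarrow> 'a \<Rightarrow> 'b::comm_ring_1"
  assumes "finite S" "u \<in> S"
    and "\<And>i j. i \<in> S \<Longrightarrow> j \<in> S \<Longrightarrow> N i j = M i j + (if i = u \<and> j = u then c else 0)"
  shows "det_on S N = det_on S M + c * det_on (S - {u}) M"
proof -
  have t: "of_int (sign p) * (\<Prod>i\<in>S. N i (p i)) = of_int (sign p) * (\<Prod>i\<in>S. M i (p i))
      + (if p u = u then c * (of_int (sign p) * (\<Prod>i\<in>S - {u}. M i (p i))) else 0)"
    if "p permutes S" for p
  proof -
    have pin: "\<And>i. i \<in> S \<Longrightarrow> p i \<in> S" using permutes_in_image[OF that] by simp
    have "(\<Prod>i\<in>S. N i (p i)) = N u (p u) * (\<Prod>i\<in>S - {u}. N i (p i))"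
      using assms(1,2) by (simp add: prod.remove)
    also have "(\<Prod>i\<in>S - {u}. N i (p i)) = (\<Prod>i\<in>S - {u}. M i (p i))"
      using assms(3) pin by (intro prod.cong) auto
    also have "N u (p u) = M u (p u) + (if p u = u then c else 0)"
      using assms(2,3) pin by auto
    finally have "(\<Prod>i\<in>S. N i (p i)) = (M u (p u) + (if p u = u then c else 0)) * (\<Prod>i\<in>S - {u}. M i (p i))" .
    moreover have "(\<Prod>i\<in>S. M i (p i)) = M u (p u) * (\<Prod>i\<in>S - {u}. M i (p i))"
      using assms(1,2) by (simp add: prod.remove)
    ultimately show ?thesis by (simp add: algebra_simps)
  qed
  have "det_on S N = (\<Sum>p\<in>{p. p permutes S}. of_int (sign p) * (\<Prod>i\<in>S. M i (p i))
      + (if p u = u then c * (of_int (sign p) * (\<Prod>i\<in>S - {u}. M i (p i))) else 0))"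
    unfolding det_on_def using t by (intro sum.cong) auto
  also have "\<dots> = det_on S M + (\<Sum>p\<in>{p. p permutes S}. if p u = u then c * (of_int (sign p) * (\<Prod>i\<in>S - {u}. M i (p i))) else 0)"
    unfolding det_on_def by (simp add: sum.distrib)
  also have "(\<Sum>p\<in>{p. p permutes S}. if p u = u then c * (of_int (sign p) * (\<Prod>i\<in>S - {u}. M i (p i))) else 0)
      = (\<Sum>p\<in>{p. p permutes S - {u}}. c * (of_int (sign p) * (\<Prod>i\<in>S - {u}. M i (p i))))"
    by (rule sum_fix[OF assms(1,2)])
  also have "\<dots> = c * det_on (S - {u}) M"
    unfolding det_on_def by (simp add: sum_distrib_left)
  finally show ?thesis .
qed

lemma det_on_row:
  fixes M :: "'a \<Rightarrow> 'a \<Rightarrow> 'b::comm_ring_1"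
  assumes "finite S" "l \<in> S" "\<And>j. j \<in> S \<Longrightarrow> j \<noteq> l \<Longrightarrow> M l j = 0"
  shows "det_on S M = M l l * det_on (S - {l}) M"
proof -
  have t: "of_int (sign p) * (\<Prod>i\<in>S. M i (p i))
      = (if p l = l then M l l * (of_int (sign p) * (\<Prod>i\<in>S - {l}. M i (p i))) else 0)"
    if "p permutes S" for p
  proof -
    have pin: "p l \<in> S" using permutes_in_image[OF that] assms(2) by simp
    have "(\<Prod>i\<in>S. M i (p i)) = M l (p l) * (\<Prod>i\<in>S - {l}. M i (p i))"
      using assms(1,2) by (simp add: prod.remove)
    then show ?thesis using assms(3)[OF pin] by auto
  qed
  have "det_on S M = (\<Sum>p\<in>{p. p permutes S}. if p l = l then M l l * (of_int (sign p) * (\<Prod>i\<in>S - {l}. M i (p i))) else 0)"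
    unfolding det_on_def using t by (intro sum.cong) auto
  also have "\<dots> = (\<Sum>p\<in>{p. p permutes S - {l}}. M l l * (of_int (sign p) * (\<Prod>i\<in>S - {l}. M i (p i))))"
    by (rule sum_fix[OF assms(1,2)])
  also have "\<dots> = M l l * det_on (S - {l}) M"
    unfolding det_on_def by (simp add: sum_distrib_left)
  finally show ?thesis .
qed

lemma det_on_leaf:
  fixes M :: "'a \<Rightarrow> 'a \<Rightarrow> 'b::comm_ring_1"
  assumes fin: "finite S" and lS: "l \<in> S" and uS: "u \<in> S" and lu: "l \<noteq> u"
    and row: "\<And>j. j \<in> S \<Longrightarrow> j \<noteq> l \<Longrightarrow> j \<noteq> u \<Longrightarrow> M l j = 0"
    and col: "\<And>i. i \<in> S \<Longrightarrow> i \<noteq> l \<Longrightarrow> i \<noteq> u \<Longrightarrow> M i l = 0"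
  shows "det_on S M = M l l * det_on (S - {l}) M - M l u * M u l * det_on (S - {l, u}) M"
proof -
  define \<tau> where "\<tau> = transpose l u"
  define g where "g q = of_int (sign q) * (\<Prod>i\<in>S - {l, u}. M i (q i))" for q
  have tperm: "\<tau> permutes S" unfolding \<tau>_def using lS uS by (rule permutes_swap_id)
  have tsign: "sign \<tau> = -1" unfolding \<tau>_def using lu by (simp add: sign_swap_id)
  have t: "of_int (sign p) * (\<Prod>i\<in>S. M i (p i))
     = (if p l = l then M l l * (of_int (sign p) * (\<Prod>i\<in>S - {l}. M i (p i))) else 0)
     + (if p l = u \<and> p u = l then - (M l u * M u l) * g (\<tau> \<circ> p) else 0)"
    if pp: "p permutes S" for p
  proof -
    have pin: "\<And>i. i \<in> S \<Longrightarrow> p i \<in> S" using permutes_in_image[OF pp] by simp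
    have pinj: "\<And>i j. p i = p j \<Longrightarrow> i = j" using permutes_inj[OF pp] by (simp add: inj_eq)
    have P1: "(\<Prod>i\<in>S. M i (p i)) = M l (p l) * (\<Prod>i\<in>S - {l}. M i (p i))"
      using fin lS by (simp add: prod.remove)
    show ?thesis
    proof (cases "p l = l")
      case True
      then show ?thesis using P1 lu by simp
    next
      case nl: False
      show ?thesis
      proof (cases "p l = u \<and> p u = l")
        case True
        have "(\<Prod>i\<in>S - {l}. M i (p i)) = M u (p u) * (\<Prod>i\<in>S - {l} - {u}. M i (p i))"
          using prod.remove[of "S - {l}" u "\<lambda>i. M i (p i)"] fin uS lu by simp
        also have "S - {l} - {u} = S - {l, u}" by auto
        finally have P2: "(\<Prod>i\<in>S. M i (p i)) = M l u * (M u l * (\<Prod>i\<in>S - {l, u}. M i (p i)))"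
          using P1 True by simp
        have "(\<Prod>i\<in>S - {l, u}. M i ((\<tau> \<circ> p) i)) = (\<Prod>i\<in>S - {l, u}. M i (p i))"
        proof (rule prod.cong[OF refl])
          fix i assume i: "i \<in> S - {l, u}"
          have "p i \<noteq> l" using True pinj[of i u] i by auto
          moreover have "p i \<noteq> u" using True pinj[of i l] i by auto
          ultimately show "M i ((\<tau> \<circ> p) i) = M i (p i)" unfolding \<tau>_def by simp
        qed
        moreover have "sign (\<tau> \<circ> p) = - sign p"
          using sign_compose[OF permutes_imp_permutation[OF fin tperm] permutes_imp_permutation[OF fin pp]] tsign
          by simp
        ultimately have "g (\<tau> \<circ> p) = - (of_int (sign p) * (\<Prod>i\<in>S - {l, u}. M i (p i)))"
          unfolding g_def by simp
        then show ?thesis using True nl P2 by (simp add: algebra_simps)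
      next
        case False
        have "(\<Prod>i\<in>S. M i (p i)) = 0"
        proof (cases "p l = u")
          case False
          then have "M l (p l) = 0" using row pin lS nl by blast
          then show ?thesis using P1 by simp
        next
          case True
          with \<open>\<not> (p l = u \<and> p u = l)\<close> have pul: "p u \<noteq> l" by simp
          define k where "k = inv p l"
          have pk: "p k = l" unfolding k_def using permutes_inverses[OF pp] by simp
          have kS: "k \<in> S" using pk permutes_in_image[OF pp] lS by metis
          have "k \<noteq> l" using pk True lu by auto
          moreover have "k \<noteq> u" using pk pul by auto
          ultimately have "M k (p k) = 0" using col kS pk by simp
          moreover have "(\<Prod>i\<in>S. M i (p i)) = M k (p k) * (\<Prod>i\<in>S - {k}. M i (p i))"
            using fin kS by (simp add: prod.remove)
          ultimately show ?thesis by simp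
        qed
        then show ?thesis using nl False by auto
      qed
    qed
  qed
  define P where "P = {p. p permutes S}"
  define Q where "Q = {q. q permutes S - {l, u}}"
  have finP: "finite P" unfolding P_def using fin by (simp add: finite_permutations)
  have "det_on S M = (\<Sum>p\<in>P. (if p l = l then M l l * (of_int (sign p) * (\<Prod>i\<in>S - {l}. M i (p i))) else 0)
     + (if p l = u \<and> p u = l then - (M l u * M u l) * g (\<tau> \<circ> p) else 0))"
    unfolding det_on_def P_def using t by (intro sum.cong) auto
  also have "\<dots> = (\<Sum>p\<in>P. if p l = l then M l l * (of_int (sign p) * (\<Prod>i\<in>S - {l}. M i (p i))) else 0)
     + (\<Sum>p\<in>P. if p l = u \<and> p u = l then - (M l u * M u l) * g (\<tau> \<circ> p) else 0)"
    by (simp add: sum.distrib)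
  also have "(\<Sum>p\<in>P. if p l = l then M l l * (of_int (sign p) * (\<Prod>i\<in>S - {l}. M i (p i))) else 0)
      = M l l * det_on (S - {l}) M"
    unfolding P_def sum_fix[OF fin lS] det_on_def by (simp add: sum_distrib_left)
  also have "(\<Sum>p\<in>P. if p l = u \<and> p u = l then - (M l u * M u l) * g (\<tau> \<circ> p) else 0)
      = (\<Sum>p\<in>{p\<in>P. p l = u \<and> p u = l}. - (M l u * M u l) * g (\<tau> \<circ> p))"
    by (rule sum.inter_filter[symmetric, OF finP])
  also have "{p\<in>P. p l = u \<and> p u = l} = (\<lambda>q. \<tau> \<circ> q) ` Q"
  proof (intro set_eqI iffI)
    fix p assume "p \<in> {p\<in>P. p l = u \<and> p u = l}"
    then have pp: "p permutes S" and pl: "p l = u" and pu: "p u = l" unfolding P_def by auto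
    have "\<tau> \<circ> p permutes S" using permutes_compose[OF pp tperm] .
    moreover have "(\<tau> \<circ> p) l = l" "(\<tau> \<circ> p) u = u" unfolding \<tau>_def using pl pu by simp_all
    ultimately have "\<tau> \<circ> p \<in> Q" unfolding Q_def by (auto intro: permutes_superset)
    moreover have "p = \<tau> \<circ> (\<tau> \<circ> p)" unfolding \<tau>_def by (simp add: fun_eq_iff)
    ultimately show "p \<in> (\<lambda>q. \<tau> \<circ> q) ` Q" by blast
  next
    fix p assume "p \<in> (\<lambda>q. \<tau> \<circ> q) ` Q"
    then obtain q where q: "q permutes S - {l, u}" and pq: "p = \<tau> \<circ> q" unfolding Q_def by auto
    have qS: "q permutes S" using q by (rule permutes_subset) auto
    have "q l = l" "q u = u" using q by (auto intro: permutes_not_in)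
    then show "p \<in> {p\<in>P. p l = u \<and> p u = l}"
      unfolding P_def pq using permutes_compose[OF qS tperm] unfolding \<tau>_def by simp
  qed
  also have "(\<Sum>p\<in>(\<lambda>q. \<tau> \<circ> q) ` Q. - (M l u * M u l) * g (\<tau> \<circ> p))
      = (\<Sum>q\<in>Q. - (M l u * M u l) * g (\<tau> \<circ> (\<tau> \<circ> q)))"
  proof (rule sum.reindex[unfolded comp_def])
    show "inj_on (\<lambda>q. \<tau> \<circ> q) Q"
      by (rule inj_onI) (metis (no_types) \<tau>_def comp_assoc transpose_comp_involutory id_comp)
  qed
  also have "\<dots> = - (M l u * M u l) * det_on (S - {l, u}) M"
  proof -
    have tt: "\<And>q. \<tau> \<circ> (\<tau> \<circ> q) = q" unfolding \<tau>_def by (simp add: fun_eq_iff)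
    show ?thesis by (simp only: tt) (simp add: Q_def det_on_def g_def sum_distrib_left)
  qed
  finally show ?thesis by simp
qed

lemma sg_facts:
  assumes "simple_graph V E"
  shows "finite V" "\<And>a b. E a b \<Longrightarrow> a \<in> V" "\<And>a b. E a b \<Longrightarrow> b \<in> V"
    "\<And>a b. E a b \<Longrightarrow> E b a" "\<And>a. \<not> E a a"
  using assms unfolding simple_graph_def by blast+

lemma finite_edges:
  assumes "simple_graph V E" shows "finite (edges E)"
proof -
  have "edges E \<subseteq> (\<lambda>(a, b). {a, b}) ` (V \<times> V)"
  proof
    fix e assume "e \<in> edges E"
    then obtain a b where "e = {a, b}" "E a b" unfolding edges_def by blast
    then show "e \<in> (\<lambda>(a, b). {a, b}) ` (V \<times> V)" using sg_facts[OF assms] by force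
  qed
  moreover have "finite (V \<times> V)" using sg_facts(1)[OF assms] by simp
  ultimately show ?thesis by (meson finite_imageI finite_subset)
qed

lemma degree_sum_le:
  assumes sg: "simple_graph V E"
  shows "(\<Sum>v\<in>V. degree V E v) \<le> 2 * card (edges E)"
proof -
  note f = sg_facts[OF sg]
  define D where "D = {(a, b). E a b}"
  have D1: "D = Sigma V (\<lambda>v. {w\<in>V. E v w})"
  proof (intro set_eqI iffI)
    fix z assume "z \<in> D"
    then obtain a b where "z = (a, b)" "E a b" unfolding D_def by blast
    then show "z \<in> Sigma V (\<lambda>v. {w\<in>V. E v w})" using f by blast
  next
    fix z assume "z \<in> Sigma V (\<lambda>v. {w\<in>V. E v w})"
    then obtain a b where "z = (a, b)" "E a b" by blast
    then show "z \<in> D" unfolding D_def by blast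
  qed
  have "card D = (\<Sum>v\<in>V. degree V E v)"
    unfolding D1 degree_def by (rule card_SigmaI) (simp_all add: f(1))
  moreover have "D = (\<Union>e\<in>edges E. {(a, b). E a b \<and> {a, b} = e})"
  proof (intro set_eqI iffI)
    fix z assume "z \<in> D"
    then obtain a b where "z = (a, b)" "E a b" unfolding D_def by blast
    then show "z \<in> (\<Union>e\<in>edges E. {(a, b). E a b \<and> {a, b} = e})" unfolding edges_def by blast
  next
    fix z assume "z \<in> (\<Union>e\<in>edges E. {(a, b). E a b \<and> {a, b} = e})"
    then obtain a b where "z = (a, b)" "E a b" by blast
    then show "z \<in> D" unfolding D_def by blast
  qed
  moreover have "card (\<Union>e\<in>edges E. {(a, b). E a b \<and> {a, b} = e}) \<le> (\<Sum>e\<in>edges E. card {(a, b). E a b \<and> {a, b} = e})"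
    by (rule card_UN_le[OF finite_edges[OF sg]])
  moreover have "(\<Sum>e\<in>edges E. card {(a, b). E a b \<and> {a, b} = e}) \<le> (\<Sum>e\<in>edges E. 2)"
  proof (rule sum_mono)
    fix e assume "e \<in> edges E"
    then obtain x y where e: "e = {x, y}" unfolding edges_def by blast
    have "{(a, b). E a b \<and> {a, b} = e} \<subseteq> {(x, y), (y, x)}"
    proof
      fix z assume "z \<in> {(a, b). E a b \<and> {a, b} = e}"
      then obtain a b where "z = (a, b)" "{a, b} = {x, y}" unfolding e by blast
      then show "z \<in> {(x, y), (y, x)}" by (auto simp: doubleton_eq_iff)
    qed
    then have "card {(a, b). E a b \<and> {a, b} = e} \<le> card {(x, y), (y, x)}"
      by (rule card_mono[rotated]) simp
    also have "\<dots> \<le> 2" by (cases "x = y") simp_all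
    finally show "card {(a, b). E a b \<and> {a, b} = e} \<le> 2" .
  qed
  ultimately show ?thesis by simp
qed

lemma tree_leaf:
  assumes T: "is_tree V E" and c: "card V \<ge> 2"
  shows "\<exists>l u. l \<in> V \<and> u \<in> V \<and> l \<noteq> u \<and> E l u \<and> (\<forall>w. E l w \<longrightarrow> w = u)"
proof -
  have sg: "simple_graph V E" and con: "connected_graph V E"
    and ce: "card (edges E) = card V - 1" using T unfolding is_tree_def by auto
  note f = sg_facts[OF sg]
  have "\<exists>l\<in>V. degree V E l < 2"
  proof (rule ccontr)
    assume "\<not> ?thesis"
    then have "\<forall>v\<in>V. 2 \<le> degree V E v" by auto
    then have "(\<Sum>v\<in>V. 2) \<le> (\<Sum>v\<in>V. degree V E v)" by (intro sum_mono) auto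
    with degree_sum_le[OF sg] ce c show False by simp
  qed
  then obtain l where lV: "l \<in> V" and dl: "degree V E l < 2" by blast
  obtain x where xV: "x \<in> V" and xl: "x \<noteq> l"
  proof -
    have "card (V - {l}) > 0" using c f(1) lV by simp
    then have "V - {l} \<noteq> {}" by (simp add: card_gt_0_iff)
    then show ?thesis using that by blast
  qed
  have "E\<^sup>*\<^sup>* l x" using con lV xV unfolding connected_graph_def by blast
  then obtain u where Elu: "E l u" using xl by (metis converse_rtranclpE)
  have uV: "u \<in> V" using f(3)[OF Elu] .
  have lu: "l \<noteq> u" using Elu f(5) by metis
  have fin: "finite {w\<in>V. E l w}" using f(1) by simp
  have "card {w\<in>V. E l w} \<le> Suc 0" using dl unfolding degree_def by simp
  then have one: "\<forall>a\<in>{w\<in>V. E l w}. \<forall>b\<in>{w\<in>V. E l w}. a = b"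
    using card_le_Suc0_iff_eq[OF fin] by blast
  have "\<forall>w. E l w \<longrightarrow> w = u"
  proof (intro allI impI)
    fix w assume "E l w"
    then have "w \<in> {w\<in>V. E l w}" using f(3) by blast
    moreover have "u \<in> {w\<in>V. E l w}" using uV Elu by blast
    ultimately show "w = u" using one by blast
  qed
  then show ?thesis using lV uV lu Elu by blast
qed

lemma tree_del:
  assumes T: "is_tree V E" and lV: "l \<in> V" and uV: "u \<in> V" and lu: "l \<noteq> u"
    and Elu: "E l u" and leaf: "\<forall>w. E l w \<longrightarrow> w = u"
  shows "is_tree (V - {l}) (\<lambda>a b. E a b \<and> a \<noteq> l \<and> b \<noteq> l)"
proof -
  define E' where "E' = (\<lambda>a b. E a b \<and> a \<noteq> l \<and> b \<noteq> l)"
  have sg: "simple_graph V E" and con: "connected_graph V E"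
    and ce: "card (edges E) = card V - 1" using T unfolding is_tree_def by auto
  note f = sg_facts[OF sg]
  have nb: "E a l \<Longrightarrow> a = u" for a using f(4) leaf by blast
  have sg': "simple_graph (V - {l}) E'"
    unfolding simple_graph_def E'_def using f by blast
  have claim: "(b \<noteq> l \<longrightarrow> E'\<^sup>*\<^sup>* a b) \<and> (b = l \<longrightarrow> E'\<^sup>*\<^sup>* a u)"
    if "E\<^sup>*\<^sup>* a b" "a \<noteq> l" for a b
    using that(1)
  proof (induction rule: rtranclp_induct)
    case base
    then show ?case using that(2) by simp
  next
    case (step b c)
    show ?case
    proof (cases "c = l")
      case True
      then have "b = u" using nb step(2) by simp
      then show ?thesis using step(3) lu True by simp
    next
      case False
      show ?thesis
      proof (cases "b = l")
        case True
        then have "c = u" using leaf step(2) by simp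
        then show ?thesis using step(3) True False by simp
      next
        case bl: False
        then have "E' b c" unfolding E'_def using step(2) False by simp
        then show ?thesis using step(3) bl False by (meson rtranclp.rtrancl_into_rtrancl)
      qed
    qed
  qed
  have con': "connected_graph (V - {l}) E'"
    unfolding connected_graph_def
  proof (intro ballI)
    fix a b assume "a \<in> V - {l}" "b \<in> V - {l}"
    then have "E\<^sup>*\<^sup>* a b" "a \<noteq> l" "b \<noteq> l" using con unfolding connected_graph_def by auto
    then show "E'\<^sup>*\<^sup>* a b" using claim by blast
  qed
  have ed: "edges E' = edges E - {{l, u}}"
  proof (intro set_eqI iffI)
    fix e assume "e \<in> edges E'"
    then obtain a b where e: "e = {a, b}" "E a b" "a \<noteq> l" "b \<noteq> l" unfolding edges_def E'_def by blast
    then have "e \<in> edges E" unfolding edges_def by blast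
    moreover have "e \<noteq> {l, u}" using e by (auto simp: doubleton_eq_iff)
    ultimately show "e \<in> edges E - {{l, u}}" by blast
  next
    fix e assume "e \<in> edges E - {{l, u}}"
    then obtain a b where e: "e = {a, b}" "E a b" and ne: "{a, b} \<noteq> {l, u}" unfolding edges_def by blast
    have "a \<noteq> l" using ne leaf e(2) by auto
    moreover have "b \<noteq> l" using ne nb e(2) by auto
    ultimately show "e \<in> edges E'" unfolding edges_def E'_def using e by blast
  qed
  have "{l, u} \<in> edges E" unfolding edges_def using Elu by blast
  then have "card (edges E') = card (edges E) - 1"
    unfolding ed using finite_edges[OF sg] by simp
  also have "\<dots> = card (V - {l}) - 1" using ce lV f(1) by simp
  finally have "card (edges E') = card (V - {l}) - 1" .
  moreover have "V - {l} \<noteq> {}" using uV lu by blast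
  ultimately show ?thesis using sg' con' unfolding is_tree_def E'_def by blast
qed

lemma tree_del_degree:
  assumes T: "is_tree V E" and lV: "l \<in> V" and uV: "u \<in> V" and lu: "l \<noteq> u"
    and Elu: "E l u" and leaf: "\<forall>w. E l w \<longrightarrow> w = u"
  shows "degree V E l = 1"
    and "\<And>i. i \<noteq> u \<Longrightarrow> i \<noteq> l \<Longrightarrow> degree V E i = degree (V - {l}) (\<lambda>a b. E a b \<and> a \<noteq> l \<and> b \<noteq> l) i"
    and "degree V E u = Suc (degree (V - {l}) (\<lambda>a b. E a b \<and> a \<noteq> l \<and> b \<noteq> l) u)"
proof -
  have sg: "simple_graph V E" using T unfolding is_tree_def by auto
  note f = sg_facts[OF sg]
  have nb: "E a l \<Longrightarrow> a = u" for a using f(4) leaf by blast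
  have "{w\<in>V. E l w} = {u}" using leaf uV Elu by blast
  then show "degree V E l = 1" unfolding degree_def by simp
  show "degree V E i = degree (V - {l}) (\<lambda>a b. E a b \<and> a \<noteq> l \<and> b \<noteq> l) i" if "i \<noteq> u" "i \<noteq> l" for i
  proof -
    have "{w\<in>V. E i w} = {w\<in>V - {l}. E i w \<and> i \<noteq> l \<and> w \<noteq> l}" using nb that by blast
    then show ?thesis unfolding degree_def by simp
  qed
  have "{w\<in>V. E u w} = insert l {w\<in>V - {l}. E u w \<and> u \<noteq> l \<and> w \<noteq> l}" using f(4)[OF Elu] lV lu by blast
  moreover have "finite {w\<in>V - {l}. E u w \<and> u \<noteq> l \<and> w \<noteq> l}" using f(1) by simp
  ultimately show "degree V E u = Suc (degree (V - {l}) (\<lambda>a b. E a b \<and> a \<noteq> l \<and> b \<noteq> l) u)"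
    unfolding degree_def by simp
qed

lemma main_induct:
  "is_tree V E \<Longrightarrow> card V = n \<Longrightarrow>
     psi V E = [:-1, 0, 1:] * psi_tilde V E
   \<and> poly (psi_tilde V E) 1 = real (card V - 1) * (-1) ^ (card V - 2)
   \<and> poly (psi_tilde V E) (-1) = real (card V - 1)
   \<and> (\<forall>v\<in>V. poly (psi_del V E v) 1 = (-1) ^ (card V - 1) \<and> poly (psi_del V E v) (-1) = 1)"
proof (induction n arbitrary: V E)
  case 0
  then show ?case unfolding is_tree_def simple_graph_def by auto
next
  case (Suc n)
  have T: "is_tree V E" and cV: "card V = Suc n" by fact+
  have sg: "simple_graph V E" using T unfolding is_tree_def by auto
  note f = sg_facts[OF sg]
  define Z :: "real poly" where "Z = [:-1, 0, 1:]"
  define zq :: "real poly" where "zq = [:0, -1:]"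
  have Z0: "Z \<noteq> 0" unfolding Z_def by simp
  have zqZ: "zq * zq - 1 = Z" unfolding Z_def zq_def by (simp add: one_pCons)
  show ?case
  proof (cases n)
    case 0
    then obtain a where Va: "V = {a}" using cV card_1_singletonE by auto
    have noE: "\<not> E x y" for x y
    proof
      assume "E x y"
      then have "x = a" "y = a" using f(2,3) Va by blast+
      then show False using \<open>E x y\<close> f(5) by simp
    qed
    have "degree V E a = 0" unfolding degree_def using noE by simp
    then have Maa: "psi_matrix V E a a = 0" unfolding psi_matrix_def using noE by simp
    have d0: "det_on {} (psi_matrix V E) = 1" unfolding det_on_def by simp
    have pa: "psi V E = det_on {a} (psi_matrix V E)" unfolding psi_def by (simp add: Va)
    have "psi V E = 0" unfolding pa
      using det_on_row[of "{a}" a "psi_matrix V E"] Maa by simp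
    moreover then have "psi_tilde V E = 0" unfolding psi_tilde_def by simp
    moreover have "psi_del V E a = det_on {} (psi_matrix V E)" unfolding psi_del_def by (simp add: Va)
    then have "psi_del V E a = 1" using d0 by simp
    ultimately show ?thesis using Va by simp
  next
    case (Suc m)
    have c2: "card V \<ge> 2" using cV Suc by simp
    obtain l u where lV: "l \<in> V" and uV: "u \<in> V" and lu: "l \<noteq> u" and Elu: "E l u"
      and leaf: "\<forall>w. E l w \<longrightarrow> w = u" using tree_leaf[OF T c2] by blast
    define V' where "V' = V - {l}"
    define E' where "E' = (\<lambda>a b. E a b \<and> a \<noteq> l \<and> b \<noteq> l)"
    have nb: "E a l \<Longrightarrow> a = u" for a using f(4) leaf by blast
    have T': "is_tree V' E'" unfolding V'_def E'_def using tree_del[OF T lV uV lu Elu leaf] .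
    have cV': "card V' = Suc m" unfolding V'_def using cV Suc lV f(1) by simp
    have finV': "finite V'" unfolding V'_def using f(1) by simp
    have uV': "u \<in> V'" unfolding V'_def using uV lu by simp
    note dg = tree_del_degree[OF T lV uV lu Elu leaf, folded E'_def V'_def]
    have IH: "psi V' E' = Z * psi_tilde V' E'"
      "poly (psi_tilde V' E') 1 = real m * (-1) ^ (m - 1)"
      "poly (psi_tilde V' E') (-1) = real m"
      "\<And>v. v \<in> V' \<Longrightarrow> poly (psi_del V' E' v) 1 = (-1) ^ m"
      "\<And>v. v \<in> V' \<Longrightarrow> poly (psi_del V' E' v) (-1) = 1"
      using Suc.IH[OF T'] cV' Suc unfolding Z_def by auto
    define M where "M = psi_matrix V E"
    define M' where "M' = psi_matrix V' E'"
    have F1: "M i j = M' i j + (if i = u \<and> j = u then zq else 0)" if "i \<in> V'" "j \<in> V'" for i j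
    proof -
      have il: "i \<noteq> l" "j \<noteq> l" using that unfolding V'_def by auto
      then have EE: "E i j = E' i j" unfolding E'_def by simp
      show ?thesis
      proof (cases "i = u \<and> j = u")
        case True
        then show ?thesis unfolding M_def M'_def psi_matrix_def zq_def using dg(3) EE
          by (simp add: of_nat_Suc)
      next
        case False
        have "i = j \<Longrightarrow> degree V E i = degree V' E' i" using dg(2)[of i] il False by auto
        then show ?thesis unfolding M_def M'_def psi_matrix_def using EE False by auto
      qed
    qed
    have F2: "M i j = M' i j" if "i \<in> V' - {u}" "j \<in> V' - {u}" for i j
      using F1[of i j] that by auto
    have Mll: "M l l = zq" unfolding M_def psi_matrix_def zq_def using dg(1) f(5) by simp
    have Mlu: "M l u = 1" unfolding M_def psi_matrix_def using lu Elu by simp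
    have Mul: "M u l = 1" unfolding M_def psi_matrix_def using lu f(4)[OF Elu] by simp
    have row: "M l j = 0" if "j \<noteq> l" "j \<noteq> u" for j
      unfolding M_def psi_matrix_def using that leaf by auto
    have col: "M i l = 0" if "i \<noteq> l" "i \<noteq> u" for i
      unfolding M_def psi_matrix_def using that nb by auto
    define Pu where "Pu = psi_del V' E' u"
    have A: "det_on V' M = psi V' E' + zq * Pu"
      unfolding psi_def Pu_def psi_del_def M'_def[symmetric]
      by (rule det_on_diag_add[OF finV' uV']) (rule F1)
    have Vlu: "V - {l, u} = V' - {u}" unfolding V'_def by auto
    have "det_on (V' - {u}) M = det_on (V' - {u}) M'" by (rule det_on_cong) (rule F2)
    then have B: "det_on (V - {l, u}) M = Pu"
      unfolding Pu_def psi_del_def Vlu M'_def by simp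
    have C: "psi V E = zq * det_on V' M - det_on (V - {l, u}) M"
      unfolding psi_def M_def[symmetric] V'_def
      using det_on_leaf[OF f(1) lV uV lu, of M] row col Mll Mlu Mul by simp
    have psiE: "psi V E = Z * (zq * psi_tilde V' E' + Pu)"
      unfolding C A B IH(1) zqZ[symmetric] by (simp add: algebra_simps)
    have tilde: "psi_tilde V E = zq * psi_tilde V' E' + Pu"
      unfolding psi_tilde_def psiE Z_def[symmetric] using Z0 by simp
    have Pu1: "poly Pu 1 = (-1) ^ m" and Pum: "poly Pu (-1) = 1"
      unfolding Pu_def using IH(4,5)[OF uV'] by auto
    have P'1: "poly (psi V' E') 1 = 0" and P'm: "poly (psi V' E') (-1) = 0"
      unfolding IH(1) Z_def by simp_all
    have part1: "psi V E = [:-1, 0, 1:] * psi_tilde V E"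
      using psiE tilde Z_def by simp
    have part2: "poly (psi_tilde V E) 1 = real (card V - 1) * (-1) ^ (card V - 2)"
      unfolding tilde cV Suc using IH(2) Pu1 unfolding zq_def
      by (cases m) (simp_all add: algebra_simps)
    have part3: "poly (psi_tilde V E) (-1) = real (card V - 1)"
      unfolding tilde cV Suc using IH(3) Pum unfolding zq_def by simp
    have part4: "poly (psi_del V E v) 1 = (-1) ^ (card V - 1) \<and> poly (psi_del V E v) (-1) = 1"
      if vV: "v \<in> V" for v
    proof -
      have pd: "psi_del V E v = det_on (V - {v}) M" unfolding psi_del_def M_def ..
      have ev: "poly (zq * X) x = - x * poly X x" for X x unfolding zq_def by simp
      show ?thesis
      proof (cases "v = l")
        case True
        have "psi_del V E v = psi V' E' + zq * Pu" using pd A True unfolding V'_def by simp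
        then show ?thesis using P'1 P'm Pu1 Pum cV Suc by (simp add: zq_def)
      next
        case vl: False
        show ?thesis
        proof (cases "v = u")
          case True
          have "det_on (V - {u}) M = M l l * det_on (V - {u} - {l}) M"
            by (rule det_on_row) (use f(1) lV lu row in auto)
          also have "V - {u} - {l} = V' - {u}" unfolding V'_def by auto
          also have "det_on (V' - {u}) M = Pu"
            using B unfolding Vlu .
          finally have pe: "psi_del V E v = zq * Pu" using pd True Mll by simp
          then show ?thesis using Pu1 Pum cV Suc by (simp add: zq_def)
        next
          case vu: False
          have vV': "v \<in> V'" unfolding V'_def using vV vl by simp
          have "det_on (V - {v}) M = M l l * det_on (V - {v} - {l}) M - M l u * M u l * det_on (V - {v} - {l, u}) M"
            by (rule det_on_leaf) (use f(1) lV uV lu vl vu row col in auto)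
          also have "V - {v} - {l} = V' - {v}" unfolding V'_def by auto
          also have "V - {v} - {l, u} = V' - {v} - {u}" unfolding V'_def by auto
          also have "det_on (V' - {v}) M = det_on (V' - {v}) M' + zq * det_on (V' - {v} - {u}) M'"
            by (rule det_on_diag_add) (use finV' uV' vu F1 in auto)
          also have "det_on (V' - {v} - {u}) M = det_on (V' - {v} - {u}) M'"
            by (rule det_on_cong) (use F2 in auto)
          finally have pe: "psi_del V E v = zq * (psi_del V' E' v + zq * det_on (V' - {v} - {u}) M') - det_on (V' - {v} - {u}) M'"
            using pd Mll Mlu Mul unfolding psi_del_def M'_def by simp
          have "poly (psi_del V E v) x = - x * poly (psi_del V' E' v) x + (x * x - 1) * poly (det_on (V' - {v} - {u}) M') x" for x
            unfolding pe zq_def by (simp add: algebra_simps)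
          from this[of 1] this[of "-1"] show ?thesis using IH(4,5)[OF vV'] cV Suc by simp
        qed
      qed
    qed
    show ?thesis using part1 part2 part3 part4 by blast
  qed
qed

theorem lemma2p5:
  fixes V :: "'a set" and E :: "'a \<Rightarrow> 'a \<Rightarrow> bool"
  assumes "is_tree V E" and "card V \<ge> 2"
  shows "(\<forall>v\<in>V. poly (psi_del V E v) 1 = (-1) ^ (card V - 1)
                 \<and> poly (psi_del V E v) (-1) = 1 ^ (card V - 1))
         \<and> poly (psi_tilde V E) 1 = real (card V - 1) * (-1) ^ (card V - 2)
         \<and> poly (psi_tilde V E) (-1) = real (card V - 1) * 1 ^ (card V - 2)"
  using main_induct[OF assms(1) refl] by simp

end
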